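(* Let $M\in S_2^+$, let $e_1,\dots,e_n\in\mathbb Z^2$ with $n>2$, and let $\varepsilon\in\{-1,1\}$. Assume that for all $1\le i\le n$, with $e_{n+1}:=e_1$, $$\det(e_i,e_{i+1})=\varepsilon,\qquad \langle e_i,Me_{i+1}\rangle>-\tfrac12\min\{\|e_i\|_M^2,\|e_{i+1}\|_M^2\}.$$ Then every $M$-reduced basis $(e,f)$ of $\mathbb Z^2$ satisfies $\{e,f\}\subset\{e_1,\dots,e_n\}$.
   Context: $\|e\|_M:=\sqrt{\langle e,Me\rangle}$. A basis of $\mathbb Z^2$ is a pair in $\mathbb Z^2$ with determinant $\pm1$. An $M$-reduced basis is a basis $(e_1,e_2)$ with $\|e_1\|_M=\min\{\|e\|_M:e\in\mathbb Z^2\setminus\{0\}\}$ and $\|e_2\|_M=\min\{\|e\|_M:e\in\mathbb Z^2\setminus e_1\mathbb Z\}$. *)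

theory Defs
  imports "HOL-Analysis.Analysis"
begin

definition pos_def_sym :: "real^2^2 \<Rightarrow> bool" where
  "pos_def_sym M \<longleftrightarrow> transpose M = M \<and> (\<forall>x::real^2. x \<noteq> 0 \<longrightarrow> x \<bullet> (M *v x) > 0)"

definition rv :: "int^2 \<Rightarrow> real^2" where
  "rv e = (\<chi> i. real_of_int (e $ i))"

definition bform :: "real^2^2 \<Rightarrow> int^2 \<Rightarrow> int^2 \<Rightarrow> real" where
  "bform M e f = rv e \<bullet> (M *v rv f)"

definition mnorm :: "real^2^2 \<Rightarrow> int^2 \<Rightarrow> real" where
  "mnorm M e = sqrt (bform M e e)"

definition det2 :: "int^2 \<Rightarrow> int^2 \<Rightarrow> int" where
  "det2 e f = e $ 1 * f $ 2 - e $ 2 * f $ 1"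

definition is_basis :: "int^2 \<Rightarrow> int^2 \<Rightarrow> bool" where
  "is_basis e f \<longleftrightarrow> det2 e f = 1 \<or> det2 e f = -1"

definition reduced_basis :: "real^2^2 \<Rightarrow> int^2 \<Rightarrow> int^2 \<Rightarrow> bool" where
  "reduced_basis M e1 e2 \<longleftrightarrow> is_basis e1 e2 \<and>
     mnorm M e1 = Inf (mnorm M ` (UNIV - {0})) \<and>
     mnorm M e2 = Inf (mnorm M ` (UNIV - range (\<lambda>k::int. k *s e1)))"

end

theory Submission
  imports Defs
begin

lemma bform_expand: "bform M x y =
  of_int (x$1) * (M$1$1 * of_int (y$1) + M$1$2 * of_int (y$2)) +
  of_int (x$2) * (M$2$1 * of_int (y$1) + M$2$2 * of_int (y$2))"
  unfolding bform_def rv_def inner_vec_def matrix_vector_mult_def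
  by (simp add: sum_2)

lemma sym12: assumes "pos_def_sym M" shows "M$1$2 = M$2$1"
proof -
  have "transpose M = M" using assms unfolding pos_def_sym_def by simp
  then have "(transpose M)$1$2 = M$1$2" by simp
  then show ?thesis by (simp add: transpose_def)
qed

lemma rv_zero: "rv x = 0 \<Longrightarrow> x = 0"
  unfolding rv_def by (simp add: vec_eq_iff)

lemma Q_pos: "pos_def_sym M \<Longrightarrow> x \<noteq> 0 \<Longrightarrow> bform M x x > 0"
  unfolding pos_def_sym_def bform_def using rv_zero by blast

lemma Q_nonneg: "bform M x x \<ge> 0" if "pos_def_sym M"
proof (cases "x = 0")
  case True
  have "rv x = 0" using True unfolding rv_def by (simp add: vec_eq_iff)
  then show ?thesis unfolding bform_def by simp
next
  case False
  then show ?thesis using Q_pos that by fastforce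
qed

lemma mnorm_sq: "pos_def_sym M \<Longrightarrow> (mnorm M x)^2 = bform M x x"
  unfolding mnorm_def using Q_nonneg by simp

lemma mnorm_le: "pos_def_sym M \<Longrightarrow> mnorm M x \<le> mnorm M y \<longleftrightarrow> bform M x x \<le> bform M y y"
  unfolding mnorm_def by simp

lemma Q_expand: assumes "pos_def_sym M"
  shows "bform M (a *s x + b *s y) (a *s x + b *s y) =
    of_int a^2 * bform M x x + 2 * of_int a * of_int b * bform M x y + of_int b^2 * bform M y y"
  using sym12[OF assms] unfolding bform_expand
  by (simp add: algebra_simps power2_eq_square)

lemma key: fixes p q B a b :: real
  assumes "p > 0" "q > 0" "B > -(1/2)*min p q" "a \<ge> 1" "b \<ge> 1"
  shows "a^2*p + 2*a*b*B + b^2*q > max p q"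
proof -
  have ab: "a*b > 0" using assms by simp
  have h: "2*a*b*B + a*b*min p q > 0"
  proof -
    have "(a*b) * (2*B) > (a*b) * (- min p q)" using ab assms(3) by (intro mult_strict_left_mono) auto
    then show ?thesis by (simp add: algebra_simps)
  qed
  have g: "a^2*p - a*b*min p q + b^2*q \<ge> max p q"
  proof (cases "p \<le> q")
    case True
    then have m: "min p q = p" "max p q = q" by auto
    show ?thesis
    proof (cases "a \<ge> b")
      case True
      have "a*(a-b)*p \<ge> 0" using True assms by simp
      moreover have "b^2 \<ge> 1" using assms by (simp add: one_le_power)
      hence "b^2*q \<ge> q" using assms by simp
      ultimately show ?thesis unfolding m by (simp add: algebra_simps power2_eq_square)
    next
      case False
      have "a*(a-b)*p \<ge> a*(a-b)*q" using False assms \<open>p\<le>q\<close>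
        by (intro mult_left_mono_neg) (auto simp: mult_nonneg_nonpos)
      moreover have "(a^2 - a*b + b^2) \<ge> 1"
      proof -
        have "a*b \<ge> 1" using assms using mult_mono[of 1 a 1 b] by simp 
        moreover have "(a-b)^2 \<ge> 0" by simp
        ultimately show ?thesis by (simp add: algebra_simps power2_eq_square)
      qed
      then have "(a^2 - a*b + b^2)*q \<ge> q" using assms by simp
      ultimately show ?thesis unfolding m by (simp add: algebra_simps power2_eq_square)
    qed
  next
    case False
    then have m: "min p q = q" "max p q = p" by auto
    show ?thesis
    proof (cases "b \<ge> a")
      case True
      have "b*(b-a)*q \<ge> 0" using True assms by simp
      moreover have "a^2 \<ge> 1" using assms by (simp add: one_le_power)
      hence "a^2*p \<ge> p" using assms by simp
      ultimately show ?thesis unfolding m by (simp add: algebra_simps power2_eq_square)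
    next
      case False
      have "b*(b-a)*q \<ge> b*(b-a)*p" using False assms \<open>\<not> p\<le>q\<close>
        by (intro mult_left_mono_neg) (auto simp: mult_nonneg_nonpos)
      moreover have "(a^2 - a*b + b^2) \<ge> 1"
      proof -
        have "a*b \<ge> 1" using assms using mult_mono[of 1 a 1 b] by simp 
        moreover have "(a-b)^2 \<ge> 0" by simp
        ultimately show ?thesis by (simp add: algebra_simps power2_eq_square)
      qed
      then have "(a^2 - a*b + b^2)*p \<ge> p" using assms by simp
      ultimately show ?thesis unfolding m by (simp add: algebra_simps power2_eq_square)
    qed
  qed
  show ?thesis using h g by linarith
qed

lemma decomp: assumes "det2 x y = \<epsilon>" "\<epsilon>*\<epsilon> = 1"
  shows "v = (-(\<epsilon>*det2 y v)) *s x + (\<epsilon>*det2 x v) *s y"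
proof -
  have id: "det2 x y * v$i = det2 v y * x$i + det2 x v * y$i" if "i = 1 \<or> i = 2" for i
    using that unfolding det2_def by (auto simp: algebra_simps)
  have c: "v$i = ((-(\<epsilon>*det2 y v)) *s x + (\<epsilon>*det2 x v) *s y)$i" if "i = 1 \<or> i = 2" for i
  proof -
    have "v$i = \<epsilon>*\<epsilon>*(v$i)" using assms by simp
    also have "\<dots> = \<epsilon>*(det2 x y * v$i)" using assms by simp
    also have "\<dots> = \<epsilon>*(det2 v y * x$i + det2 x v * y$i)" using id[OF that] by simp
    also have "\<dots> = ((-(\<epsilon>*det2 y v)) *s x + (\<epsilon>*det2 x v) *s y)$i"
      unfolding det2_def by (simp add: algebra_simps)
    finally show ?thesis .
  qed
  show ?thesis unfolding vec_eq_iff forall_2 using c by auto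
qed

lemma pluecker: "det2 x z * det2 y w = det2 x y * det2 z w + det2 x w * det2 y z"
  unfolding det2_def by (simp add: algebra_simps)


lemma det2_swap: "det2 x y = - det2 y x" unfolding det2_def by simp

lemma det2_smult_r: "det2 u (b *s y) = b * det2 u y" unfolding det2_def by (simp add: algebra_simps)
lemma det2_smult_l: "det2 (b *s y) u = b * det2 y u" unfolding det2_def by (simp add: algebra_simps)
lemma det2_zero: "det2 0 u = 0" "det2 u 0 = 0" unfolding det2_def by simp_all

lemma cycle:
  fixes Q :: "nat \<Rightarrow> bool"
  assumes "Q i0" "1 \<le> i0" "i0 \<le> n"
    and step: "\<And>i. 1 \<le> i \<Longrightarrow> i \<le> n \<Longrightarrow> Q i \<Longrightarrow> Q (if i = n then 1 else i + 1)"
  shows "1 \<le> j \<Longrightarrow> j \<le> n \<Longrightarrow> Q j"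
proof -
  have up: "Q j" if "Q i" "1 \<le> i" "i \<le> j" "j \<le> n" for i j
    using that(3,4)
  proof (induction j rule: dec_induct)
    case base then show ?case using that by simp
  next
    case (step k)
    then have "Q k" by simp
    then show ?case using assms(4)[of k] step.hyps step.prems that by auto
  qed
  have "Q n" using up[OF assms(1-3)] by simp
  then have "Q 1" using step[of n] assms by simp
  then show "1 \<le> j \<Longrightarrow> j \<le> n \<Longrightarrow> Q j" using up[of 1 j] by simp
qed

lemma cone:
  fixes es :: "nat \<Rightarrow> int^2" and n :: nat and \<epsilon> :: int
  assumes n2: "n \<ge> 2" and ee: "\<epsilon>*\<epsilon> = 1"
    and dt: "\<And>i. 1 \<le> i \<Longrightarrow> i \<le> n \<Longrightarrow> det2 (es i) (es (if i = n then 1 else i + 1)) = \<epsilon>"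
  shows "\<exists>i\<in>{1..n}. \<epsilon>*det2 (es i) v \<ge> 0 \<and> \<epsilon>*det2 (es (if i = n then 1 else i + 1)) v \<le> 0"
proof (rule ccontr)
  let ?nx = "\<lambda>i. if i = n then 1 else i + 1"
  assume "\<not> ?thesis"
  then have H: "\<epsilon>*det2 (es i) v \<ge> 0 \<Longrightarrow> \<epsilon>*det2 (es (?nx i)) v > 0" if "1 \<le> i" "i \<le> n" for i
    using that by force
  have pre: "\<exists>k. 1 \<le> k \<and> k \<le> n \<and> j = ?nx k" if "1 \<le> j" "j \<le> n" for j
  proof (cases "j = 1")
    case True then show ?thesis using n2 by (intro exI[of _ n]) auto
  next
    case False then show ?thesis using that by (intro exI[of _ "j - 1"]) auto
  qed
  obtain t :: int where t: "t*t = 1" "\<And>i. 1 \<le> i \<Longrightarrow> i \<le> n \<Longrightarrow> t*(\<epsilon>*det2 (es i) v) > 0"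
  proof (cases "\<exists>i0. 1 \<le> i0 \<and> i0 \<le> n \<and> \<epsilon>*det2 (es i0) v \<ge> 0")
    case True
    then obtain i0 where i0: "1 \<le> i0" "i0 \<le> n" "\<epsilon>*det2 (es i0) v \<ge> 0" by blast
    have all: "\<epsilon>*det2 (es j) v \<ge> 0" if "1 \<le> j" "j \<le> n" for j
      using cycle[of "\<lambda>j. \<epsilon>*det2 (es j) v \<ge> 0", OF i0(3) i0(1,2) _ that] H by fastforce
    have "1*(\<epsilon>*det2 (es i) v) > 0" if "1 \<le> i" "i \<le> n" for i
      using pre[OF that] H all by fastforce
    then show ?thesis using that[of 1] by simp
  next
    case False
    then have "(-1)*(\<epsilon>*det2 (es i) v) > 0" if "1 \<le> i" "i \<le> n" for i
      using that by force
    then show ?thesis using that[of "-1"] by simp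
  qed
  have pos: "\<epsilon>*det2 (es 1) (es k) > 0" if "2 \<le> k" "k \<le> n" for k
    using that
  proof (induction k rule: dec_induct)
    case base
    have "det2 (es 1) (es 2) = \<epsilon>" using dt[of 1] n2 by (simp add: numeral_2_eq_2)
    then show ?case using ee by simp
  next
    case (step k)
    let ?x = "es 1" and ?y = "es k" and ?z = "es (Suc k)"
    have yz: "det2 ?y ?z = \<epsilon>" using dt[of k] step by simp
    have IH: "\<epsilon>*det2 ?x ?y > 0" using step by simp
    have pl: "(\<epsilon>*det2 ?x ?z) * (t*(\<epsilon>*det2 ?y v)) =
       (\<epsilon>*det2 ?x ?y) * (t*(\<epsilon>*det2 ?z v)) + (t*(\<epsilon>*det2 ?x v)) * (\<epsilon>*det2 ?y ?z)"
      using pluecker[of ?x ?z ?y v] by (simp add: algebra_simps)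
    have "(\<epsilon>*det2 ?x ?y) * (t*(\<epsilon>*det2 ?z v)) > 0" using IH t(2)[of "Suc k"] step by simp
    moreover have "(t*(\<epsilon>*det2 ?x v)) * (\<epsilon>*det2 ?y ?z) > 0" using t(2)[of 1] yz ee n2 by simp
    ultimately have "(\<epsilon>*det2 ?x ?z) * (t*(\<epsilon>*det2 ?y v)) > 0" using pl by simp
    moreover have "t*(\<epsilon>*det2 ?y v) > 0" using t(2)[of k] step by simp
    ultimately show ?case by (simp add: zero_less_mult_iff)
  qed
  have "\<epsilon>*det2 (es 1) (es n) > 0" using pos[of n] n2 by simp
  moreover have "det2 (es n) (es 1) = \<epsilon>" using dt[of n] n2 by simp
  ultimately show False using det2_swap[of "es 1" "es n"] ee by simp
qed


lemma prim1: fixes b d :: int assumes "b \<ge> 0" "\<bar>b * d\<bar> = 1" shows "b = 1"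
proof -
  have "\<bar>b\<bar> * \<bar>d\<bar> = 1" using assms by (simp add: abs_mult)
  then show ?thesis using assms(1) zmult_eq_1_iff[of "\<bar>b\<bar>" "\<bar>d\<bar>"] by auto
qed

lemma in_list:
  fixes M :: "real^2^2" and es :: "nat \<Rightarrow> int^2" and n :: nat and \<epsilon> :: int
  assumes pd: "pos_def_sym M" and n2: "n \<ge> 2" and ee: "\<epsilon>*\<epsilon> = 1"
    and dt: "\<And>i. 1 \<le> i \<Longrightarrow> i \<le> n \<Longrightarrow> det2 (es i) (es (if i = n then 1 else i + 1)) = \<epsilon>"
    and bf: "\<And>i. 1 \<le> i \<Longrightarrow> i \<le> n \<Longrightarrow>
           bform M (es i) (es (if i = n then 1 else i + 1)) >
             - (1/2) * min ((mnorm M (es i))\<^sup>2) ((mnorm M (es (if i = n then 1 else i + 1)))\<^sup>2)"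
    and v0: "v \<noteq> 0" and pr: "\<bar>det2 u v\<bar> = 1"
    and H: "\<And>i. 1 \<le> i \<Longrightarrow> i \<le> n \<Longrightarrow> bform M v v \<le> bform M (es i) (es i) \<or>
               bform M v v \<le> bform M (es (if i = n then 1 else i + 1)) (es (if i = n then 1 else i + 1))"
  shows "v \<in> es ` {1..n}"
proof -
  let ?nx = "\<lambda>i. if i = n then 1 else i + 1"
  obtain i where i: "1 \<le> i" "i \<le> n" and c1: "\<epsilon>*det2 (es i) v \<ge> 0" and c2: "\<epsilon>*det2 (es (?nx i)) v \<le> 0"
    using cone[where es=es and n=n and \<epsilon>=\<epsilon>, OF n2 ee dt] by fastforce
  define x where "x = es i"
  define y where "y = es (?nx i)"
  define a where "a = -(\<epsilon>*det2 y v)"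
  define b where "b = \<epsilon>*det2 x v"
  have dxy: "det2 x y = \<epsilon>" using dt[OF i] unfolding x_def y_def by simp
  have vd: "v = a *s x + b *s y" unfolding a_def b_def by (rule decomp[OF dxy ee])
  have a0: "a \<ge> 0" using c2 unfolding a_def y_def by simp
  have b0: "b \<ge> 0" using c1 unfolding b_def x_def by simp
  have nxi: "1 \<le> ?nx i" "?nx i \<le> n" using i by auto
  have xin: "x \<in> es ` {1..n}" unfolding x_def using i by auto
  have yin: "y \<in> es ` {1..n}" unfolding y_def using nxi by auto
  consider "a = 0" | "b = 0" | "a \<ge> 1 \<and> b \<ge> 1" using a0 b0 by linarith
  then show ?thesis
  proof cases
    case 1
    then have "v = b *s y" using vd by simp
    then have "\<bar>b * det2 u y\<bar> = 1" using pr by (simp add: det2_smult_r)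
    then have "b = 1" using prim1 b0 by blast
    then show ?thesis using \<open>v = b *s y\<close> yin by simp
  next
    case 2
    then have "v = a *s x" using vd by simp
    then have "\<bar>a * det2 u x\<bar> = 1" using pr by (simp add: det2_smult_r)
    then have "a = 1" using prim1 a0 by blast
    then show ?thesis using \<open>v = a *s x\<close> xin by simp
  next
    case 3
    have ee': "\<epsilon> \<noteq> 0" using ee by auto
    have x0: "x \<noteq> 0" using dxy ee' det2_zero by auto
    have y0: "y \<noteq> 0" using dxy ee' det2_zero by auto
    have p: "bform M x x > 0" using Q_pos[OF pd x0] .
    have q: "bform M y y > 0" using Q_pos[OF pd y0] .
    have B: "bform M x y > -(1/2) * min (bform M x x) (bform M y y)"
      using bf[OF i] unfolding x_def y_def mnorm_sq[OF pd] .
    have "real_of_int a ^2 * bform M x x + 2 * real_of_int a * real_of_int b * bform M x y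
        + real_of_int b ^2 * bform M y y > max (bform M x x) (bform M y y)"
      using 3 by (intro key[OF p q B]) auto
    then have "bform M v v > max (bform M x x) (bform M y y)"
      using Q_expand[OF pd, of a x b y] vd by simp
    moreover have "bform M v v \<le> bform M x x \<or> bform M v v \<le> bform M y y"
      using H[OF i] unfolding x_def y_def .
    ultimately show ?thesis by auto
  qed
qed

theorem mainTheorem11:
  fixes M :: "real^2^2" and es :: "nat \<Rightarrow> int^2" and n :: nat and \<epsilon> :: int
  assumes "pos_def_sym M"
    and "n > 2"
    and "\<epsilon> = 1 \<or> \<epsilon> = -1"
    and "\<And>i. 1 \<le> i \<Longrightarrow> i \<le> n \<Longrightarrow>
           det2 (es i) (es (if i = n then 1 else i + 1)) = \<epsilon>"
    and "\<And>i. 1 \<le> i \<Longrightarrow> i \<le> n \<Longrightarrow>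
           bform M (es i) (es (if i = n then 1 else i + 1)) >
             - (1/2) * min ((mnorm M (es i))\<^sup>2) ((mnorm M (es (if i = n then 1 else i + 1)))\<^sup>2)"
  shows "\<forall>e f. reduced_basis M e f \<longrightarrow> {e, f} \<subseteq> es ` {1..n}"
proof (intro allI impI)
  fix e f assume red: "reduced_basis M e f"
  have pd: "pos_def_sym M" and n2: "n \<ge> 2" using assms by auto
  have ee: "\<epsilon>*\<epsilon> = 1" using assms(3) by auto
  have ee': "\<epsilon> \<noteq> 0" using ee by auto
  have bas: "det2 e f = 1 \<or> det2 e f = -1" using red unfolding reduced_basis_def is_basis_def by simp
  have e0: "e \<noteq> 0" using bas det2_zero by auto
  have f0: "f \<noteq> 0" using bas det2_zero by auto
  have mn0: "mnorm M x \<ge> 0" for x unfolding mnorm_def using Q_nonneg[OF pd] by simp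
  have emin: "bform M e e \<le> bform M x x" if "x \<noteq> 0" for x
  proof -
    have "mnorm M e = Inf (mnorm M ` (UNIV - {0}))" using red unfolding reduced_basis_def by simp
    also have "\<dots> \<le> mnorm M x"
      by (rule cInf_lower) (use that mn0 in \<open>auto intro!: bdd_belowI[of _ 0]\<close>)
    finally show ?thesis using mnorm_le[OF pd] by simp
  qed
  have fmin: "bform M f f \<le> bform M x x" if "x \<notin> range (\<lambda>k::int. k *s e)" for x
  proof -
    have "mnorm M f = Inf (mnorm M ` (UNIV - range (\<lambda>k::int. k *s e)))" using red unfolding reduced_basis_def by simp
    also have "\<dots> \<le> mnorm M x"
      by (rule cInf_lower) (use that mn0 in \<open>auto intro!: bdd_belowI[of _ 0]\<close>)
    finally show ?thesis using mnorm_le[OF pd] by simp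
  qed
  have esnz: "es i \<noteq> 0" if "1 \<le> i" "i \<le> n" for i
    using assms(4)[OF that] ee' det2_zero by auto
  have "e \<in> es ` {1..n}"
  proof (rule in_list[where es=es and n=n and \<epsilon>=\<epsilon> and M=M, OF pd n2 ee assms(4) assms(5) e0, of f])
    show "\<bar>det2 f e\<bar> = 1" using bas det2_swap[of f e] by auto
    fix i assume "1 \<le> i" "i \<le> n"
    then show "bform M e e \<le> bform M (es i) (es i) \<or>
      bform M e e \<le> bform M (es (if i = n then 1 else i + 1)) (es (if i = n then 1 else i + 1))"
      using emin esnz by blast
  qed
  moreover have "f \<in> es ` {1..n}"
  proof (rule in_list[where es=es and n=n and \<epsilon>=\<epsilon> and M=M, OF pd n2 ee assms(4) assms(5) f0, of e])
    show "\<bar>det2 e f\<bar> = 1" using bas by auto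
    fix i assume i: "1 \<le> i" "i \<le> n"
    have "\<not> (es i \<in> range (\<lambda>k::int. k *s e) \<and> es (if i = n then 1 else i + 1) \<in> range (\<lambda>k::int. k *s e))"
    proof
      assume "es i \<in> range (\<lambda>k::int. k *s e) \<and> es (if i = n then 1 else i + 1) \<in> range (\<lambda>k::int. k *s e)"
      then obtain k l where "es i = k *s e" "es (if i = n then 1 else i + 1) = l *s e" by blast
      then have "det2 (es i) (es (if i = n then 1 else i + 1)) = 0"
        by (simp add: det2_smult_l det2_smult_r det2_def)
      then show False using assms(4)[OF i] ee' by simp
    qed
    then show "bform M f f \<le> bform M (es i) (es i) \<or>
      bform M f f \<le> bform M (es (if i = n then 1 else i + 1)) (es (if i = n then 1 else i + 1))"
      using fmin by blast
  qed
  ultimately show "{e, f} \<subseteq> es ` {1..n}" by simp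
qed

end
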